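(* Let $p\in[1,\infty)$, let $N\subseteq\mathbb{N}$ be nonempty, and let $M:=\{0\}\cup\{\tfrac1k e_{(k,\pm1)}:k\in N\}\cup\{\tfrac1k e_{(k,+1)}:k\in\mathbb{N}\setminus N\}\subseteq\ell^p$, with the metric induced by $\|\cdot\|_p$. Let $n\in\mathbb{N}$ with $n>1$, and let $C\subseteq M$ consist of $n$ points of $M$ of largest $\ell^p$ norm (i.e., $|C|=n$ and every point of $M\setminus C$ has norm at most the minimum norm of points of $C$). Then $C$ is an optimal code in $M$ and is unique up to isometry.
   Context: The standard basis of $\ell^p$ is indexed as $e_{(k,+1)}:=e_{2k-1}$ and $e_{(k,-1)}:=e_{2k}$ for $k\in\mathbb{N}$. $M$ is compact. An optimal code of size $n$ is an $n$-element subset of $M$ maximizing the minimum distance between distinct points; unique up to isometry means every optimal code of size $n$ is the image of $C$ under an isometry of $M$. *)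

theory Defs
  imports "HOL-Analysis.Analysis"
begin

text \<open>Points of l^p are real sequences indexed by nat; the standard basis vector
  e_j (j >= 1) is the indicator of coordinate j (coordinate 0 is never used).\<close>

definition std_e :: "nat \<Rightarrow> nat \<Rightarrow> real" where
  "std_e j = (\<lambda>i. if i = j then 1 else 0)"

text \<open>e_(k,+1) = e_(2k-1), e_(k,-1) = e_(2k)\<close>
definition e_pm :: "nat \<Rightarrow> bool \<Rightarrow> nat \<Rightarrow> real" where
  "e_pm k s = std_e (if s then 2 * k - 1 else 2 * k)"

definition lp_dist :: "real \<Rightarrow> (nat \<Rightarrow> real) \<Rightarrow> (nat \<Rightarrow> real) \<Rightarrow> real" where
  "lp_dist p x y = (\<Sum>\<^sub>\<infinity>i. \<bar>x i - y i\<bar> powr p) powr (1 / p)"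

definition lp_norm :: "real \<Rightarrow> (nat \<Rightarrow> real) \<Rightarrow> real" where
  "lp_norm p x = lp_dist p x (\<lambda>_. 0)"

definition space_M :: "nat set \<Rightarrow> (nat \<Rightarrow> real) set" where
  "space_M N = {\<lambda>_. 0}
     \<union> {(\<lambda>i. (1 / real k) * e_pm k s i) | k s. k \<in> N}
     \<union> {(\<lambda>i. (1 / real k) * e_pm k True i) | k. 1 \<le> k \<and> k \<notin> N}"

definition min_dist :: "('a \<Rightarrow> 'a \<Rightarrow> real) \<Rightarrow> 'a set \<Rightarrow> real" where
  "min_dist d C = Min {d x y | x y. x \<in> C \<and> y \<in> C \<and> x \<noteq> y}"

definition optimal_code :: "('a \<Rightarrow> 'a \<Rightarrow> real) \<Rightarrow> 'a set \<Rightarrow> nat \<Rightarrow> 'a set \<Rightarrow> bool" where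
  "optimal_code d M n C \<longleftrightarrow> C \<subseteq> M \<and> finite C \<and> card C = n \<and>
     (\<forall>D. D \<subseteq> M \<and> finite D \<and> card D = n \<longrightarrow> min_dist d D \<le> min_dist d C)"

definition isometry_of :: "('a \<Rightarrow> 'a \<Rightarrow> real) \<Rightarrow> 'a set \<Rightarrow> ('a \<Rightarrow> 'a) \<Rightarrow> bool" where
  "isometry_of d M f \<longleftrightarrow> bij_betw f M M \<and> (\<forall>x\<in>M. \<forall>y\<in>M. d (f x) (f y) = d x y)"

definition unique_up_to_isometry :: "('a \<Rightarrow> 'a \<Rightarrow> real) \<Rightarrow> 'a set \<Rightarrow> nat \<Rightarrow> 'a set \<Rightarrow> bool" where
  "unique_up_to_isometry d M n C \<longleftrightarrow>
     (\<forall>D. optimal_code d M n D \<longrightarrow> (\<exists>f. isometry_of d M f \<and> f ` C = D))"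

end

theory Submission
  imports Defs
begin

definition sp :: "nat \<Rightarrow> real \<Rightarrow> nat \<Rightarrow> real" where
  "sp c r = (\<lambda>i. if i = c then r else 0)"

definition Prep :: "nat \<Rightarrow> real \<Rightarrow> bool" where
  "Prep c r \<longleftrightarrow> r \<ge> 0 \<and> (c = 0 \<longrightarrow> r = 0) \<and> (c \<noteq> 0 \<longrightarrow> r = 1 / real ((c + 1) div 2))"

lemma infsum_supp:
  fixes f :: "nat \<Rightarrow> real"
  assumes "finite S" "\<And>i. i \<notin> S \<Longrightarrow> f i = 0"
  shows "infsum f UNIV = sum f S"
proof -
  have "infsum f UNIV = infsum f S"
    by (rule infsum_cong_neutral) (use assms in auto)
  then show ?thesis using assms by simp
qed

lemma rep:
  assumes "x \<in> space_M N" "0 \<notin> N"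
  shows "\<exists>c r. x = sp c r \<and> Prep c r"
  using assms unfolding space_M_def
proof (elim UnE)
  assume "x \<in> {\<lambda>_. 0}"
  then show ?thesis by (intro exI[of _ 0] exI[of _ 0]) (auto simp: sp_def Prep_def)
next
  assume "x \<in> {(\<lambda>i. (1 / real k) * e_pm k s i) | k s. k \<in> N}"
  then obtain k s where ks: "x = (\<lambda>i. (1 / real k) * e_pm k s i)" "k \<in> N" by blast
  with assms have k: "k \<ge> 1" by (cases k) auto
  show ?thesis
    apply (intro exI[of _ "if s then 2 * k - 1 else 2 * k"] exI[of _ "1 / real k"])
    using k by (auto simp: ks sp_def Prep_def e_pm_def std_e_def fun_eq_iff)
next
  assume "x \<in> {(\<lambda>i. (1 / real k) * e_pm k True i) | k. 1 \<le> k \<and> k \<notin> N}"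
  then obtain k where ks: "x = (\<lambda>i. (1 / real k) * e_pm k True i)" "k \<ge> 1" by blast
  show ?thesis
    apply (intro exI[of _ "2 * k - 1"] exI[of _ "1 / real k"])
    using ks by (auto simp: sp_def Prep_def e_pm_def std_e_def fun_eq_iff)
qed

lemma norm_sp:
  assumes "1 \<le> p" "r \<ge> 0"
  shows "lp_norm p (sp c r) = r"
proof -
  have "(\<Sum>\<^sub>\<infinity>i. \<bar>sp c r i - 0\<bar> powr p) = (\<Sum>i\<in>{c}. \<bar>sp c r i - 0\<bar> powr p)"
    by (rule infsum_supp) (auto simp: sp_def)
  also have "\<dots> = r powr p" using assms by (simp add: sp_def)
  finally show ?thesis using assms
    by (simp add: lp_norm_def lp_dist_def powr_powr powr_one)
qed

lemma dist_sp:
  assumes "1 \<le> p" "r1 \<ge> 0" "r2 \<ge> 0" "c1 \<noteq> c2"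
  shows "lp_dist p (sp c1 r1) (sp c2 r2) = (r1 powr p + r2 powr p) powr (1/p)"
proof -
  have "(\<Sum>\<^sub>\<infinity>i. \<bar>sp c1 r1 i - sp c2 r2 i\<bar> powr p) = (\<Sum>i\<in>{c1,c2}. \<bar>sp c1 r1 i - sp c2 r2 i\<bar> powr p)"
    by (rule infsum_supp) (auto simp: sp_def)
  also have "\<dots> = r1 powr p + r2 powr p" using assms by (simp add: sp_def)
  finally show ?thesis by (simp add: lp_dist_def)
qed

lemma sp_inj:
  assumes "Prep c1 r1" "Prep c2 r2" "sp c1 r1 \<noteq> sp c2 r2"
  shows "c1 \<noteq> c2"
  using assms by (auto simp: Prep_def)

definition FF :: "real \<Rightarrow> real \<Rightarrow> real \<Rightarrow> real" where
  "FF p a b = (a powr p + b powr p) powr (1/p)"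

lemma M_nonneg:
  assumes "1 \<le> p" "x \<in> space_M N" "0 \<notin> N"
  shows "lp_norm p x \<ge> 0"
proof -
  obtain c r where "x = sp c r" "Prep c r" using rep[OF assms(2,3)] by blast
  then show ?thesis using norm_sp[OF assms(1)] by (auto simp: Prep_def)
qed

lemma M_dist:
  assumes "1 \<le> p" "x \<in> space_M N" "y \<in> space_M N" "0 \<notin> N" "x \<noteq> y"
  shows "lp_dist p x y = FF p (lp_norm p x) (lp_norm p y)"
proof -
  obtain c1 r1 where 1: "x = sp c1 r1" "Prep c1 r1" using rep[OF assms(2,4)] by blast
  obtain c2 r2 where 2: "y = sp c2 r2" "Prep c2 r2" using rep[OF assms(3,4)] by blast
  have "c1 \<noteq> c2" using sp_inj 1 2 assms by blast
  then show ?thesis using 1 2 dist_sp[OF assms(1)] norm_sp[OF assms(1)]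
    by (auto simp: Prep_def FF_def)
qed

lemma div_two_cases: "(c::nat) = 2 * ((c + 1) div 2) - 1 \<or> c = 2 * ((c + 1) div 2)"
proof (cases "even c")
  case True then show ?thesis by (auto elim!: evenE)
next
  case False then show ?thesis by (auto elim!: oddE)
qed
lemma div_three: "(c1::nat) \<noteq> c2 \<Longrightarrow> c2 \<noteq> c3 \<Longrightarrow> c1 \<noteq> c3 \<Longrightarrow>
  (c1 + 1) div 2 = (c2 + 1) div 2 \<Longrightarrow> (c2 + 1) div 2 = (c3 + 1) div 2 \<Longrightarrow> False"
  using div_two_cases[of c1] div_two_cases[of c2] div_two_cases[of c3] by auto

lemma M_fiber:
  assumes "1 \<le> p" "x \<in> space_M N" "y \<in> space_M N" "z \<in> space_M N" "0 \<notin> N"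
    "x \<noteq> y" "y \<noteq> z" "x \<noteq> z" "lp_norm p x = lp_norm p y" "lp_norm p y = lp_norm p z"
  shows False
proof -
  obtain c1 r1 where 1: "x = sp c1 r1" "Prep c1 r1" using rep[OF assms(2,5)] by blast
  obtain c2 r2 where 2: "y = sp c2 r2" "Prep c2 r2" using rep[OF assms(3,5)] by blast
  obtain c3 r3 where 3: "z = sp c3 r3" "Prep c3 r3" using rep[OF assms(4,5)] by blast
  have d: "c1 \<noteq> c2" "c2 \<noteq> c3" "c1 \<noteq> c3" 
    using sp_inj[OF 1(2) 2(2)] sp_inj[OF 2(2) 3(2)] sp_inj[OF 1(2) 3(2)] 1(1) 2(1) 3(1) assms(6-8) by auto
  have n1: "lp_norm p x = r1" using 1 norm_sp[OF assms(1)] unfolding Prep_def by blast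
  have n2: "lp_norm p y = r2" using 2 norm_sp[OF assms(1)] unfolding Prep_def by blast
  have n3: "lp_norm p z = r3" using 3 norm_sp[OF assms(1)] unfolding Prep_def by blast
  have r: "r1 = r2" "r2 = r3" using assms(9,10) n1 n2 n3 by auto
  show False
  proof (cases "r1 = 0")
    case True
    then have "c1 = 0" "c2 = 0" using r 1(2) 2(2) unfolding Prep_def by auto
    then show ?thesis using d by simp
  next
    case False
    then have nz: "c1 \<noteq> 0" "c2 \<noteq> 0" "c3 \<noteq> 0" using r 1(2) 2(2) 3(2) unfolding Prep_def by auto
    then have e: "1 / real ((c1 + 1) div 2) = 1 / real ((c2 + 1) div 2)"
      "1 / real ((c2 + 1) div 2) = 1 / real ((c3 + 1) div 2)"
      using r 1(2) 2(2) 3(2) unfolding Prep_def by auto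
    have "(c1 + 1) div 2 = (c2 + 1) div 2" using e(1) by simp
    moreover have "(c2 + 1) div 2 = (c3 + 1) div 2" using e(2) by simp
    ultimately show False using d div_three by blast
  qed
qed

lemma FF_mono:
  assumes "1 \<le> p" "0 \<le> a" "a \<le> a'" "0 \<le> b" "b \<le> b'"
  shows "FF p a b \<le> FF p a' b'"
proof -
  have "a powr p \<le> a' powr p" "b powr p \<le> b' powr p" using assms by (auto intro: powr_mono2)
  then show ?thesis unfolding FF_def using assms by (intro powr_mono2) auto
qed

lemma FF_strict:
  assumes "1 \<le> p" "0 \<le> a" "a \<le> a'" "0 \<le> b" "b \<le> b'" "a < a' \<or> b < b'"
  shows "FF p a b < FF p a' b'"
proof -
  have "a powr p \<le> a' powr p" "b powr p \<le> b' powr p" using assms by (auto intro: powr_mono2)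
  moreover have "a powr p < a' powr p \<or> b powr p < b' powr p" using assms by (auto intro: powr_less_mono2)
  ultimately have "a powr p + b powr p < a' powr p + b' powr p" by auto
  then show ?thesis unfolding FF_def using assms by (intro powr_less_mono2) auto
qed

lemma FF_comm: "FF p a b = FF p b a" by (simp add: FF_def add.commute)

lemma min_dist_le:
  assumes "finite D" "x \<in> D" "y \<in> D" "x \<noteq> y"
  shows "min_dist d D \<le> d x y"
  unfolding min_dist_def
proof (rule Min_le)
  have "{d x y |x y. x \<in> D \<and> y \<in> D \<and> x \<noteq> y} \<subseteq> (\<lambda>(x,y). d x y) ` (D \<times> D)" by auto
  then show "finite {d x y |x y. x \<in> D \<and> y \<in> D \<and> x \<noteq> y}"
    using assms(1) by (meson finite_SigmaI finite_imageI finite_subset)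
  show "d x y \<in> {d x y |x y. x \<in> D \<and> y \<in> D \<and> x \<noteq> y}" using assms by blast
qed

lemma min_dist_eq:
  assumes "finite D" "x \<in> D" "y \<in> D" "x \<noteq> y"
    "\<And>u v. u \<in> D \<Longrightarrow> v \<in> D \<Longrightarrow> u \<noteq> v \<Longrightarrow> d x y \<le> d u v"
  shows "min_dist d D = d x y"
  unfolding min_dist_def
proof (rule Min_eqI)
  have "{d x y |x y. x \<in> D \<and> y \<in> D \<and> x \<noteq> y} \<subseteq> (\<lambda>(x,y). d x y) ` (D \<times> D)" by auto
  then show "finite {d x y |x y. x \<in> D \<and> y \<in> D \<and> x \<noteq> y}"
    using assms(1) by (meson finite_SigmaI finite_imageI finite_subset)
  show "d x y \<in> {d x y |x y. x \<in> D \<and> y \<in> D \<and> x \<noteq> y}" using assms by blast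
  fix t assume "t \<in> {d x y |x y. x \<in> D \<and> y \<in> D \<and> x \<noteq> y}"
  then show "d x y \<le> t" using assms(5) by blast
qed

lemma swap_iso:
  assumes "1 \<le> p" "0 \<notin> N" "x \<in> space_M N" "a \<in> space_M N" "lp_norm p x = lp_norm p a"
  defines "\<sigma> \<equiv> (\<lambda>z. if z = x then a else if z = a then x else z)"
  shows "isometry_of (lp_dist p) (space_M N) \<sigma>"
proof -
  have ss: "\<sigma> (\<sigma> z) = z" for z unfolding \<sigma>_def by auto
  have sM: "\<sigma> z \<in> space_M N" if "z \<in> space_M N" for z using that assms(3,4) unfolding \<sigma>_def by auto
  have sn: "lp_norm p (\<sigma> z) = lp_norm p z" for z using assms(5) unfolding \<sigma>_def by auto
  have "bij_betw \<sigma> (space_M N) (space_M N)"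
    by (rule bij_betw_byWitness[where f'=\<sigma>]) (use ss sM in auto)
  moreover have "lp_dist p (\<sigma> y) (\<sigma> z) = lp_dist p y z" if "y \<in> space_M N" "z \<in> space_M N" for y z
  proof (cases "y = z")
    case False
    then have "\<sigma> y \<noteq> \<sigma> z" using ss by metis
    then show ?thesis using M_dist[OF assms(1) sM[OF that(1)] sM[OF that(2)] assms(2)]
        M_dist[OF assms(1) that assms(2) False] sn by simp
  qed (simp add: lp_dist_def)
  ultimately show ?thesis unfolding isometry_of_def by blast
qed

theorem lemma4p19:
  fixes p :: real and N :: "nat set" and n :: nat and C :: "(nat \<Rightarrow> real) set"
  assumes "1 \<le> p"
    and "N \<noteq> {}" and "0 \<notin> N"
    and "1 < n"
    and "C \<subseteq> space_M N" and "finite C" and "card C = n"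
    and "\<forall>x \<in> space_M N - C. \<forall>c \<in> C. lp_norm p x \<le> lp_norm p c"
  shows "optimal_code (lp_dist p) (space_M N) n C \<and>
         unique_up_to_isometry (lp_dist p) (space_M N) n C"
proof -
  let ?M = "space_M N" and ?d = "lp_dist p" and ?nm = "lp_norm p"
  have p1: "1 \<le> p" by fact
  have nn: "?nm z \<ge> 0" if "z \<in> ?M" for z using M_nonneg[OF p1 that assms(3)] .
  have dist: "?d u v = FF p (?nm u) (?nm v)" if "u \<in> ?M" "v \<in> ?M" "u \<noteq> v" for u v
    using M_dist[OF p1 that(1,2) assms(3) that(3)] .
  have Cne: "C \<noteq> {}" using assms(4,7) by auto
  have "Min (?nm ` C) \<in> ?nm ` C" using assms(6) Cne by (intro Min_in) auto
  then obtain a where a: "a \<in> C" "?nm a = Min (?nm ` C)" by auto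
  have amin: "?nm a \<le> ?nm c" if "c \<in> C" for c using a(2) assms(6) that by simp
  have cardCa: "card (C - {a}) = n - 1" using a(1) assms(6,7) by simp
  have Cane: "C - {a} \<noteq> {}"
  proof
    assume "C - {a} = {}"
    then have "card (C - {a}) = 0" by (simp only: card.empty)
    with cardCa assms(4) show False by simp
  qed
  have "Min (?nm ` (C - {a})) \<in> ?nm ` (C - {a})" using assms(6) Cane by (intro Min_in) auto
  then obtain b where b: "b \<in> C - {a}" "?nm b = Min (?nm ` (C - {a}))" by (metis imageE)
  have bmin: "?nm b \<le> ?nm c" if "c \<in> C - {a}" for c using b(2) assms(6) that by simp
  define \<mu> where "\<mu> = ?nm a"
  define \<nu> where "\<nu> = ?nm b"
  have aM: "a \<in> ?M" and bM: "b \<in> ?M" using a(1) b(1) assms(5) by auto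
  have mu0: "0 \<le> \<mu>" using nn[OF aM] \<mu>_def by simp
  have munu: "\<mu> \<le> \<nu>" using amin b(1) \<mu>_def \<nu>_def by auto
  have ab: "a \<noteq> b" using b(1) by auto
  have out: "?nm x \<le> \<mu>" if "x \<in> ?M" "x \<notin> C" for x using assms(8) that a(1) \<mu>_def by auto
  have lowC: "FF p \<mu> \<nu> \<le> ?d u v" if "u \<in> C" "v \<in> C" "u \<noteq> v" for u v
  proof -
    have uvM: "u \<in> ?M" "v \<in> ?M" using that assms(5) by auto
    show ?thesis
    proof (cases "v = a")
      case True
      then have "u \<in> C - {a}" using that by auto
      then have "\<nu> \<le> ?nm u" using bmin \<nu>_def by auto
      moreover have "\<mu> \<le> ?nm v" using amin that \<mu>_def by auto
      ultimately have "FF p \<mu> \<nu> \<le> FF p (?nm v) (?nm u)" using FF_mono[OF p1] mu0 munu by simp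
      then show ?thesis using dist[OF uvM that(3)] FF_comm by metis
    next
      case False
      then have "v \<in> C - {a}" using that by auto
      then have "\<nu> \<le> ?nm v" using bmin \<nu>_def by auto
      moreover have "\<mu> \<le> ?nm u" using amin that \<mu>_def by auto
      ultimately have "FF p \<mu> \<nu> \<le> FF p (?nm u) (?nm v)" using FF_mono[OF p1] mu0 munu by simp
      then show ?thesis using dist[OF uvM that(3)] by metis
    qed
  qed
  have dab: "?d a b = FF p \<mu> \<nu>" using dist[OF aM bM ab] \<mu>_def \<nu>_def by simp
  have minC: "min_dist ?d C = FF p \<mu> \<nu>"
    using min_dist_eq[OF assms(6) a(1) _ ab, of ?d] b(1) lowC dab by auto
  have opt: "min_dist ?d D \<le> FF p \<mu> \<nu>" if D: "D \<subseteq> ?M" "finite D" "card D = n" for D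
  proof (cases "D \<subseteq> C")
    case True
    then have "D = C" using card_subset_eq[OF assms(6) True] D(3) assms(7) by simp
    then show ?thesis using minC by simp
  next
    case False
    then obtain x where x: "x \<in> D" "x \<notin> C" by auto
    have xM: "x \<in> ?M" using x D by auto
    have nx: "?nm x \<le> \<mu>" using out[OF xM x(2)] .
    have cDx: "card (D - {x}) = n - 1" using x(1) D by simp
    have "\<exists>y \<in> D - {x}. ?nm y \<le> \<nu>"
    proof (cases "D - {x} \<subseteq> C")
      case False
      then obtain y where "y \<in> D - {x}" "y \<notin> C" by auto
      then show ?thesis using out[of y] D munu by force
    next
      case True
      show ?thesis
      proof (cases "a \<in> D - {x}")
        case True then show ?thesis using munu \<mu>_def by auto
      next
        case False
        then have "D - {x} \<subseteq> C - {a}" using True by auto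
        then have "D - {x} = C - {a}" using card_subset_eq[of "C - {a}" "D - {x}"] assms(6) cDx cardCa by auto
        then show ?thesis using b(1) \<nu>_def by auto
      qed
    qed
    then obtain y where y: "y \<in> D - {x}" "?nm y \<le> \<nu>" by auto
    have yM: "y \<in> ?M" using y D by auto
    have "min_dist ?d D \<le> ?d x y" using min_dist_le[OF D(2) x(1), of y] y by auto
    also have "\<dots> = FF p (?nm x) (?nm y)" using dist[OF xM yM] y by auto
    also have "\<dots> \<le> FF p \<mu> \<nu>" using FF_mono[OF p1 nn[OF xM] nx nn[OF yM] y(2)] .
    finally show ?thesis .
  qed
  have optC: "optimal_code ?d ?M n C"
    unfolding optimal_code_def using assms(5,6,7) opt minC by auto
  have uniq: "\<exists>f. isometry_of ?d ?M f \<and> f ` C = D" if Dopt: "optimal_code ?d ?M n D" for D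
  proof -
    have D: "D \<subseteq> ?M" "finite D" "card D = n" using Dopt unfolding optimal_code_def by auto
    have "min_dist ?d C \<le> min_dist ?d D" using Dopt assms(5,6,7) unfolding optimal_code_def by auto
    then have H: "FF p \<mu> \<nu> \<le> FF p (?nm u) (?nm v)" if "u \<in> D" "v \<in> D" "u \<noteq> v" for u v
    proof -
      have "u \<in> ?M" "v \<in> ?M" using that D(1) by auto
      then show ?thesis using min_dist_le[OF D(2) that, of ?d] \<open>min_dist ?d C \<le> min_dist ?d D\<close> minC dist[of u v] that by auto
    qed
    show ?thesis
    proof (cases "D \<subseteq> C")
      case True
      then have "D = C" using card_subset_eq[OF assms(6) True] D(3) assms(7) by simp
      moreover have "isometry_of ?d ?M id" unfolding isometry_of_def by simp
      ultimately show ?thesis by auto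
    next
      case False
      then obtain x where x: "x \<in> D" "x \<notin> C" by auto
      have xM: "x \<in> ?M" using x D by auto
      have nx: "?nm x \<le> \<mu>" using out[OF xM x(2)] .
      have cDx: "card (D - {x}) = n - 1" using x(1) D by simp
      show ?thesis
      proof (cases "\<mu> < \<nu>")
        case True
        have sub: "v \<in> C - {a}" if v: "v \<in> D - {x}" for v
        proof -
          have vM: "v \<in> ?M" using v D by auto
          have "\<nu> \<le> ?nm v"
          proof (rule ccontr)
            assume "\<not> \<nu> \<le> ?nm v"
            then have "FF p (?nm x) (?nm v) < FF p \<mu> \<nu>"
              using FF_strict[OF p1 nn[OF xM] nx nn[OF vM]] by auto
            then show False using H[of x v] v x by auto
          qed
          then have "v \<in> C" using out[OF vM] True by force
          moreover have "v \<noteq> a" using \<open>\<nu> \<le> ?nm v\<close> True \<mu>_def by auto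
          ultimately show ?thesis by auto
        qed
        then have "D - {x} \<subseteq> C - {a}" by auto
        then have eq: "D - {x} = C - {a}" using card_subset_eq[of "C - {a}" "D - {x}"] assms(6) cDx cardCa by auto
        have "?nm x = \<mu>"
        proof (rule ccontr)
          assume "?nm x \<noteq> \<mu>"
          then have "FF p (?nm x) \<nu> < FF p \<mu> \<nu>"
            using FF_strict[OF p1 nn[OF xM] nx, of \<nu> \<nu>] nx mu0 munu by auto
          moreover have "b \<in> D" "b \<noteq> x" using eq b(1) by auto
          ultimately show False using H[of x b] x \<nu>_def by auto
        qed
        define \<sigma> where "\<sigma> = (\<lambda>z. if z = x then a else if z = a then x else z)"
        have iso: "isometry_of ?d ?M \<sigma>"
          unfolding \<sigma>_def using swap_iso[OF p1 assms(3) xM aM] \<open>?nm x = \<mu>\<close> \<mu>_def by simp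
        have "\<sigma> ` C = insert x (C - {a})"
        proof
          show "\<sigma> ` C \<subseteq> insert x (C - {a})" using x(2) unfolding \<sigma>_def by auto
          show "insert x (C - {a}) \<subseteq> \<sigma> ` C"
          proof
            fix z assume "z \<in> insert x (C - {a})"
            then show "z \<in> \<sigma> ` C"
            proof
              assume "z = x" then show ?thesis using a(1) unfolding \<sigma>_def by (intro image_eqI[of _ _ a]) auto
            next
              assume "z \<in> C - {a}" then show ?thesis using x(2) unfolding \<sigma>_def by (intro image_eqI[of _ _ z]) auto
            qed
          qed
        qed
        also have "\<dots> = D" using eq x(1) by auto
        finally show ?thesis using iso by blast
      next
        case False
        then have mn: "\<mu> = \<nu>" using munu by auto
        have "?nm x < \<mu>"
        proof (rule ccontr)
          assume "\<not> ?nm x < \<mu>"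
          then have "?nm x = \<mu>" using nx by auto
          moreover have "x \<noteq> a" "x \<noteq> b" using x(2) a(1) b(1) by auto
          ultimately show False using M_fiber[OF p1 xM aM bM assms(3) _ ab] mn \<mu>_def \<nu>_def by auto
        qed
        have sub: "v \<in> C - {a, b}" if v: "v \<in> D - {x}" for v
        proof -
          have vM: "v \<in> ?M" using v D by auto
          have "\<mu> < ?nm v"
          proof (rule ccontr)
            assume "\<not> \<mu> < ?nm v"
            then have "FF p (?nm x) (?nm v) < FF p \<mu> \<nu>"
              using FF_strict[OF p1 nn[OF xM] nx nn[OF vM]] \<open>?nm x < \<mu>\<close> mn by auto
            then show False using H[of x v] v x by auto
          qed
          then have "v \<in> C" using out[OF vM] by force
          moreover have "v \<noteq> a" "v \<noteq> b" using \<open>\<mu> < ?nm v\<close> mn \<mu>_def \<nu>_def by auto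
          ultimately show ?thesis by auto
        qed
        then have "D - {x} \<subseteq> C - {a, b}" by blast
        then have "card (D - {x}) \<le> card (C - {a, b})" using assms(6) by (intro card_mono) auto
        moreover have "card (C - {a, b}) = n - 2" using a(1) b(1) ab assms(6,7) by (simp add: card_Diff_subset)
        ultimately show ?thesis using cDx assms(4) by auto
      qed
    qed
  qed
  show ?thesis using optC uniq unfolding unique_up_to_isometry_def by blast
qed

end
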